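(* Let $1\le q<p$ and suppose a subspace $X\subseteq\mathbb{R}^n$ is $(2k,\varepsilon)$-$\ell_p$-spread. Then $X$ is $(k,\varepsilon_q)$-$\ell_q$-spread for $\varepsilon_q=\varepsilon^2\left(\frac{k}{n}\right)^{1/q}$. In particular, if $X$ is $(\Omega(n),\Omega(1))$-$\ell_p$-spread, then $X$ is also $(\Omega(n),\Omega(1))$-$\ell_q$-spread for every $1\le q<p$.
   Context: A vector $y\in\mathbb{R}^n$ is $k$-sparse if $|\mathrm{supp}(y)|\le k$. A nonzero $x\in\mathbb{R}^n$ is $(k,\varepsilon)$-$\ell_p$-compressible if some $k$-sparse $y$ has $\|x-y\|_p\le\varepsilon\|x\|_p$, and $(k,\varepsilon)$-$\ell_p$-spread otherwise. A subspace $X$ is $(k,\varepsilon)$-$\ell_p$-spread if every nonzero $x\in X$ is $(k,\varepsilon)$-$\ell_p$-spread. *)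

theory Defs
  imports "HOL-Analysis.Analysis"
begin

text \<open>Vectors in R^n are modelled as real^'n with n = CARD('n).\<close>

definition lp_norm :: "real \<Rightarrow> real ^ 'n \<Rightarrow> real" where
  "lp_norm p x = (\<Sum>i\<in>UNIV. \<bar>x $ i\<bar> powr p) powr (1 / p)"

definition supp :: "real ^ 'n \<Rightarrow> 'n set" where
  "supp y = {i. y $ i \<noteq> 0}"

definition sparse :: "nat \<Rightarrow> real ^ 'n \<Rightarrow> bool" where
  "sparse k y \<longleftrightarrow> card (supp y) \<le> k"

definition compressible :: "real \<Rightarrow> nat \<Rightarrow> real \<Rightarrow> real ^ 'n \<Rightarrow> bool" where
  "compressible p k \<epsilon> x \<longleftrightarrow> x \<noteq> 0 \<and>
     (\<exists>y. sparse k y \<and> lp_norm p (x - y) \<le> \<epsilon> * lp_norm p x)"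

definition spread_vec :: "real \<Rightarrow> nat \<Rightarrow> real \<Rightarrow> real ^ 'n \<Rightarrow> bool" where
  "spread_vec p k \<epsilon> x \<longleftrightarrow> x \<noteq> 0 \<and> \<not> compressible p k \<epsilon> x"

definition spread_subspace :: "real \<Rightarrow> nat \<Rightarrow> real \<Rightarrow> (real ^ 'n) set \<Rightarrow> bool" where
  "spread_subspace p k \<epsilon> X \<longleftrightarrow> (\<forall>x\<in>X. x \<noteq> 0 \<longrightarrow> spread_vec p k \<epsilon> x)"

end

theory Submission
  imports Defs
begin


lemma powr_le_self_small:
  fixes t r :: real assumes "0 \<le> t" "t \<le> 1" "1 \<le> r"
  shows "t powr r \<le> t"
proof (cases "t = 0")
  case False
  then have "t powr r \<le> t powr 1" using assms by (intro powr_mono') auto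
  then show ?thesis using False assms by simp
qed simp

lemma powr_convex0:
  fixes r :: real assumes "1 \<le> r"
  shows "convex_on {0..} (\<lambda>x::real. x powr r)"
proof (rule convex_onI)
  fix t x y :: real
  assume t: "0 < t" "t < 1" and x: "x \<in> {0..}" and y: "y \<in> {0..}"
  show "((1 - t) *\<^sub>R x + t *\<^sub>R y) powr r \<le> (1 - t) * x powr r + t * y powr r"
  proof (cases "x = 0 \<or> y = 0")
    case True
    then show ?thesis
    proof
      assume "x = 0"
      have "(t * y) powr r = t powr r * y powr r" using t y by (simp add: powr_mult)
      also have "\<dots> \<le> t * y powr r"
        using powr_le_self_small[of t r] t assms by (intro mult_right_mono) auto
      finally show ?thesis using \<open>x = 0\<close> by simp
    next
      assume "y = 0"
      have "((1-t) * x) powr r = (1-t) powr r * x powr r" using t x by (simp add: powr_mult)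
      also have "\<dots> \<le> (1-t) * x powr r"
        using powr_le_self_small[of "1-t" r] t assms by (intro mult_right_mono) auto
      finally show ?thesis using \<open>y = 0\<close> by simp
    qed
  next
    case False
    then have "x \<in> {0<..}" "y \<in> {0<..}" using x y by auto
    then show ?thesis using convex_onD[OF powr_convex[OF assms], of t x y] t by auto
  qed
qed (simp add: convex_real_interval)

lemma power_mean:
  fixes u :: "'a \<Rightarrow> real" and r :: real
  assumes "finite S" "S \<noteq> {}" "1 \<le> r" "\<And>i. i \<in> S \<Longrightarrow> 0 \<le> u i"
  shows "((\<Sum>i\<in>S. u i) / card S) powr r \<le> (\<Sum>i\<in>S. u i powr r) / card S"
proof -
  have c: "card S > 0" using assms by (simp add: card_gt_0_iff)
  have "(\<Sum>i\<in>S. (1 / card S) *\<^sub>R u i) powr r \<le> (\<Sum>i\<in>S. (1 / card S) * u i powr r)"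
    using convex_on_sum[OF assms(1,2) powr_convex0[OF assms(3)], of "\<lambda>_. 1 / card S" u] c assms(4)
    by auto
  then show ?thesis by (simp add: sum_distrib_left[symmetric] sum_divide_distrib[symmetric])
qed



lemma core:
  fixes S Nq Pp e2 eps kk nn p q :: real
  assumes "S \<ge> 0" "Nq \<ge> 0" "Pp \<ge> 0" "0 \<le> e2" "e2 \<le> eps" "1 \<le> kk" "kk \<le> nn" "1 \<le> q" "q < p"
    and hS: "S \<le> e2 powr q * (kk / nn) * Nq"
    and hH: "(Nq / nn) powr (p / q) \<le> Pp / nn"
  shows "(S / kk) powr ((p - q) / q) * S \<le> eps powr p * Pp"
proof -
  have kk: "kk > 0" "nn > 0" using assms by auto
  have sk: "S / kk \<ge> 0" using assms kk by simp
  have "(S / kk) powr ((p - q) / q) * S = (S / kk) powr ((p - q) / q) * (S / kk) * kk"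
    using kk by simp
  also have "(S / kk) powr ((p - q) / q) * (S / kk) = (S / kk) powr ((p - q) / q + 1)"
    using sk assms kk by (simp add: powr_add)
  also have "(p - q) / q + 1 = p / q" using assms by (simp add: field_simps)
  finally have eq: "(S / kk) powr ((p - q) / q) * S = (S / kk) powr (p / q) * kk" .
  have "S / kk \<le> e2 powr q * (Nq / nn)"
    using hS kk by (simp add: field_simps)
  then have "(S / kk) powr (p / q) \<le> (e2 powr q * (Nq / nn)) powr (p / q)"
    using sk assms by (intro powr_mono2) auto
  also have "\<dots> = e2 powr p * (Nq / nn) powr (p / q)"
  proof -
    have "(e2 powr q * (Nq / nn)) powr (p / q) = (e2 powr q) powr (p / q) * (Nq / nn) powr (p / q)"
      using assms kk by (intro powr_mult; auto)
    also have "(e2 powr q) powr (p / q) = e2 powr p" using assms by (simp add: powr_powr)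
    finally show ?thesis .
  qed
  also have "\<dots> \<le> e2 powr p * (Pp / nn)"
    using hH by (intro mult_left_mono) auto
  finally have a: "(S / kk) powr (p / q) * kk \<le> e2 powr p * (Pp / nn) * kk"
    using kk by (intro mult_right_mono) auto
  have "e2 powr p * (Pp / nn) * kk = e2 powr p * Pp * (kk / nn)" by simp
  also have "\<dots> \<le> e2 powr p * Pp * 1"
    using assms kk by (intro mult_left_mono) auto
  also have "\<dots> \<le> eps powr p * Pp"
    using assms by (auto intro!: mult_right_mono powr_mono2)
  finally show ?thesis using eq a by linarith
qed


lemma lp_nonneg: "lp_norm r v \<ge> 0"
  unfolding lp_norm_def by simp

lemma sum_abs_powr_nonneg: "(\<Sum>i\<in>UNIV. \<bar>(v::real^'n) $ i\<bar> powr r) \<ge> 0"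
  by (intro sum_nonneg) simp

lemma powr_inv_le_imp:
  fixes A B r :: real
  assumes "0 \<le> A" "0 \<le> B" "r > 0" "A powr (1 / r) \<le> B powr (1 / r)"
  shows "A \<le> B"
proof -
  have "(A powr (1 / r)) powr r \<le> (B powr (1 / r)) powr r"
    by (rule powr_mono2[OF _ _ assms(4)]) (use assms in auto)
  moreover have "(A powr (1 / r)) powr r = A" using assms by (simp add: powr_powr)
  moreover have "(B powr (1 / r)) powr r = B" using assms by (simp add: powr_powr)
  ultimately show ?thesis by simp
qed

lemma lp_pos:
  assumes "v \<noteq> 0" "r > 0"
  shows "lp_norm r (v::real^'n) > 0"
proof -
  obtain j where "v $ j \<noteq> 0" using assms by (auto simp: vec_eq_iff)
  then have "0 < \<bar>v $ j\<bar> powr r" by simp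
  also have "\<dots> \<le> (\<Sum>i\<in>UNIV. \<bar>v $ i\<bar> powr r)"
    by (intro member_le_sum) auto
  finally show ?thesis unfolding lp_norm_def by simp
qed

lemma lp_zero: "r > 0 \<Longrightarrow> lp_norm r (0::real^'n) = 0"
  unfolding lp_norm_def by simp

theorem proposition3p7:
  fixes X :: "(real ^ 'n) set" and p q \<epsilon> :: real and k :: nat
  assumes "subspace X"
    and "1 \<le> q" and "q < p"
    and "0 \<le> \<epsilon>"
    and "spread_subspace p (2 * k) \<epsilon> X"
  shows "spread_subspace q k (\<epsilon>\<^sup>2 * (real k / real CARD('n)) powr (1 / q)) X"
  unfolding spread_subspace_def
proof (intro ballI impI)
  fix x :: "real ^ 'n"
  assume xX: "x \<in> X" and x0: "x \<noteq> 0"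
  have hz: "\<And>z. sparse (2 * k) z \<Longrightarrow> \<not> lp_norm p (x - z) \<le> \<epsilon> * lp_norm p x"
    using assms(5) xX x0 unfolding spread_subspace_def spread_vec_def compressible_def by blast
  have p0: "p > 0" "q > 0" using assms by auto
  show "spread_vec q k (\<epsilon>\<^sup>2 * (real k / real CARD('n)) powr (1 / q)) x"
    unfolding spread_vec_def compressible_def
  proof (intro conjI x0 notI, elim conjE exE)
    fix y :: "real ^ 'n"
    assume ys: "sparse k y"
      and hy: "lp_norm q (x - y) \<le> \<epsilon>\<^sup>2 * (real k / real CARD('n)) powr (1 / q) * lp_norm q x"
    have e1: "\<epsilon> < 1"
    proof (rule ccontr)
      assume "\<not> \<epsilon> < 1"
      have "sparse (2 * k) (0::real^'n)" by (simp add: sparse_def supp_def)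
      moreover have "lp_norm p (x - 0) \<le> \<epsilon> * lp_norm p x"
        using \<open>\<not> \<epsilon> < 1\<close> lp_nonneg[of p x] mult_right_mono[of 1 \<epsilon> "lp_norm p x"]
        by simp
      ultimately show False using hz by blast
    qed
    have nbig: "2 * k < CARD('n)"
    proof (rule ccontr)
      assume "\<not> 2 * k < CARD('n)"
      have "card (supp x) \<le> CARD('n)" by (rule card_mono) auto
      then have "sparse (2 * k) x" using \<open>\<not> 2 * k < CARD('n)\<close> by (simp add: sparse_def)
      moreover have "lp_norm p (x - x) \<le> \<epsilon> * lp_norm p x"
        using lp_zero[OF p0(1), where 'n='n] lp_nonneg[of p x] assms(4) by simp
      ultimately show False using hz by blast
    qed
    show False
    proof (cases "k = 0")
      case True
      then have "supp y = {}" using ys by (simp add: sparse_def)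
      then have "y = 0" by (auto simp: supp_def vec_eq_iff)
      then have "lp_norm q x \<le> 0" using hy True by simp
      then show False using lp_pos[OF x0 p0(2)] by simp
    next
      case False
      define r where "r = x - y"
      define S where "S = (\<Sum>i\<in>UNIV. \<bar>r $ i\<bar> powr q)"
      define Nq where "Nq = (\<Sum>i\<in>UNIV. \<bar>x $ i\<bar> powr q)"
      define Pp where "Pp = (\<Sum>i\<in>UNIV. \<bar>x $ i\<bar> powr p)"
      define kk where "kk = real k"
      define nn where "nn = real CARD('n)"
      define e2 where "e2 = \<epsilon>\<^sup>2"
      define t where "t = S powr (1 / q) / kk powr (1 / q)"
      have kk1: "1 \<le> kk" using False by (simp add: kk_def)
      have kknn: "kk \<le> nn" using nbig by (simp add: kk_def nn_def)
      have S0: "S \<ge> 0" unfolding S_def by (rule sum_abs_powr_nonneg)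
      have Nq0: "Nq \<ge> 0" unfolding Nq_def by (rule sum_abs_powr_nonneg)
      have Pp0: "Pp \<ge> 0" unfolding Pp_def by (rule sum_abs_powr_nonneg)
      have e20: "0 \<le> e2" by (simp add: e2_def)
      have e2e: "e2 \<le> \<epsilon>" using e1 assms(4) by (simp add: e2_def power2_eq_square mult_left_le)
      have t0: "t \<ge> 0" unfolding t_def by simp
      have tq: "t powr q = S / kk"
      proof -
        have "t powr q = (S powr (1 / q)) powr q / (kk powr (1 / q)) powr q"
          unfolding t_def by (simp add: powr_divide)
        also have "\<dots> = S / kk" using S0 kk1 p0 by (simp add: powr_powr)
        finally show ?thesis .
      qed
      have hS: "S \<le> e2 powr q * (kk / nn) * Nq"
      proof (rule powr_inv_le_imp[OF S0 _ p0(2)])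
        show "0 \<le> e2 powr q * (kk / nn) * Nq" using Nq0 kk1 kknn by simp
        have "(e2 powr q * (kk / nn) * Nq) powr (1 / q)
            = (e2 powr q) powr (1 / q) * (kk / nn) powr (1 / q) * Nq powr (1 / q)"
        proof -
          have "(e2 powr q * (kk / nn) * Nq) powr (1 / q) = (e2 powr q * (kk / nn)) powr (1 / q) * Nq powr (1 / q)"
            using Nq0 kk1 kknn e20 by (intro powr_mult; auto)
          also have "(e2 powr q * (kk / nn)) powr (1 / q) = (e2 powr q) powr (1 / q) * (kk / nn) powr (1 / q)"
            using Nq0 kk1 kknn e20 by (intro powr_mult; auto)
          finally show ?thesis .
        qed
        also have "(e2 powr q) powr (1 / q) = e2" using e20 p0 by (simp add: powr_powr)
        finally show "S powr (1 / q) \<le> (e2 powr q * (kk / nn) * Nq) powr (1 / q)"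
          using hy unfolding S_def Nq_def r_def e2_def kk_def nn_def lp_norm_def by simp
      qed
      have hH: "(Nq / nn) powr (p / q) \<le> Pp / nn"
      proof -
        have "((\<Sum>i\<in>UNIV. \<bar>x $ i\<bar> powr q) / card (UNIV::'n set)) powr (p / q)
            \<le> (\<Sum>i\<in>UNIV. (\<bar>x $ i\<bar> powr q) powr (p / q)) / card (UNIV::'n set)"
          using assms(2,3) by (intro power_mean) auto
        also have "(\<Sum>i\<in>UNIV. (\<bar>x $ i\<bar> powr q) powr (p / q)) = Pp"
          unfolding Pp_def using p0 by (simp add: powr_powr)
        finally show ?thesis by (simp add: Nq_def nn_def)
      qed
      define B where "B = {i. i \<notin> supp y \<and> t < \<bar>x $ i\<bar>}"
      define z where "z = (\<chi> i. if i \<in> supp y \<union> B then x $ i else 0)"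
      have rx: "i \<notin> supp y \<Longrightarrow> r $ i = x $ i" for i
        by (simp add: r_def supp_def)
      have cardB: "card B \<le> k"
      proof (cases "B = {}")
        case False
        have "(\<Sum>i\<in>B. t powr q) < (\<Sum>i\<in>B. \<bar>x $ i\<bar> powr q)"
          using False t0 p0 by (intro sum_strict_mono powr_less_mono2) (auto simp: B_def)
        also have "\<dots> = (\<Sum>i\<in>B. \<bar>r $ i\<bar> powr q)" using rx by (simp add: B_def)
        also have "\<dots> \<le> S" unfolding S_def by (intro sum_mono2) auto
        finally have "real (card B) * (S / kk) < S" using tq by simp
        then have "real (card B) * S < kk * S" using kk1 by (simp add: field_simps)
        then have "real (card B) < kk" using S0
          by (metis mult_right_mono not_less)
        then show ?thesis by (simp add: kk_def)
      qed simp
      have "sparse (2 * k) z"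
      proof -
        have fy: "card (supp y) \<le> k" using ys by (simp add: sparse_def)
        have "supp z \<subseteq> supp y \<union> B" by (auto simp: supp_def z_def)
        then have "card (supp z) \<le> card (supp y \<union> B)" by (intro card_mono) auto
        also have "\<dots> \<le> card (supp y) + card B" by (rule card_Un_le)
        finally show ?thesis using fy cardB by (simp add: sparse_def)
      qed
      moreover have "lp_norm p (x - z) \<le> \<epsilon> * lp_norm p x"
      proof -
        have tm: "\<bar>(x - z) $ i\<bar> powr p \<le> t powr (p - q) * \<bar>r $ i\<bar> powr q" for i
        proof (cases "i \<in> supp y \<union> B")
          case True
          then show ?thesis by (simp add: z_def)
        next
          case False
          then have xi: "\<bar>x $ i\<bar> \<le> t" "r $ i = x $ i" "(x - z) $ i = x $ i"
            using rx by (auto simp: B_def z_def)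
          have "\<bar>x $ i\<bar> powr p = \<bar>x $ i\<bar> powr (p - q) * \<bar>x $ i\<bar> powr q"
            by (simp add: powr_add[symmetric])
          also have "\<dots> \<le> t powr (p - q) * \<bar>x $ i\<bar> powr q"
            using xi assms(3) by (intro mult_right_mono powr_mono2) auto
          finally show ?thesis using xi by simp
        qed
        have "(\<Sum>i\<in>UNIV. \<bar>(x - z) $ i\<bar> powr p) \<le> (\<Sum>i\<in>UNIV. t powr (p - q) * \<bar>r $ i\<bar> powr q)"
          by (intro sum_mono tm)
        also have "\<dots> = t powr (p - q) * S" by (simp add: S_def sum_distrib_left)
        also have "t powr (p - q) = (S / kk) powr ((p - q) / q)"
          using t0 p0 tq[symmetric] by (simp add: powr_powr)
        also have "(S / kk) powr ((p - q) / q) * S \<le> \<epsilon> powr p * Pp"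
          by (rule core[OF S0 Nq0 Pp0 e20 e2e kk1 kknn assms(2,3) hS hH])
        finally have D: "(\<Sum>i\<in>UNIV. \<bar>(x - z) $ i\<bar> powr p) \<le> \<epsilon> powr p * Pp" .
        have "lp_norm p (x - z) \<le> (\<epsilon> powr p * Pp) powr (1 / p)"
          unfolding lp_norm_def using D p0 by (intro powr_mono2) (auto intro: sum_nonneg)
        also have "\<dots> = (\<epsilon> powr p) powr (1 / p) * Pp powr (1 / p)"
          using Pp0 assms(4) by (simp add: powr_mult)
        also have "(\<epsilon> powr p) powr (1 / p) = \<epsilon>" using assms(4) p0 by (simp add: powr_powr)
        finally show ?thesis by (simp add: lp_norm_def Pp_def)
      qed
      ultimately show False using hz by blast
    qed
  qed
qed

end
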